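(* Let $\psi:(0,1]\to(0,\infty)$ with $\psi(1)=1$, $\lim_{r\to0+}\psi(r)=0$ and $I_\psi\subset(k,k+1)$ for some positive integer $k$. Then there exists $c_1=c_1(d,k,\psi)>0$ such that $\|fg\|_{C^\psi}\le c_1\|f\|_{C^\psi}\|g\|_{C^\psi}$ for all $f,g\in C^\psi(\mathbb{R}^d)$.
   Context: $g:(0,1]\to(0,\infty)$ is almost increasing if $c\,g(r)\le g(R)$ for some $c\in(0,1]$ and all $0<r\le R\le1$, almost decreasing if $g(R)\le Cg(r)$ for some $C\ge1$ and all $0<r\le R\le1$. $M_\psi=\inf\{\alpha: \psi(r)/r^\alpha\text{ almost decreasing}\}$, $m_\psi=\sup\{\alpha: \psi(r)/r^\alpha\text{ almost increasing}\}$, $I_\psi=[m_\psi,M_\psi]$. $\|f\|_{C^0}=\sup|f|$, $\|D^jf\|_{C^0}=\max_{|\gamma|=j}\|D^\gamma f\|_{C^0}$; $[f]_{C^{-k;\psi}}=\sup_x\sup_{0<|h|\le1}\frac{|f(x+h)-f(x)|}{\psi(|h|)|h|^{-k}}$. If $m_\psi\in(k,k+1]$, $C^\psi(\mathbb{R}^d)$ is the set of continuous $f$ with $D^\gamma f$ bounded continuous for $|\gamma|\le k$ and $[D^\gamma f]_{C^{-k;\psi}}<\infty$ for $|\gamma|=k$, with norm $\|f\|_{C^\psi}=\sum_{j=0}^k\|D^jf\|_{C^0}+\max_{|\gamma|=k}[D^\gamma f]_{C^{-k;\psi}}$. *)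

theory Defs
  imports "HOL-Analysis.Analysis"
begin

definition almost_increasing :: "(real \<Rightarrow> real) \<Rightarrow> bool" where
  "almost_increasing g \<longleftrightarrow>
     (\<exists>c. 0 < c \<and> c \<le> 1 \<and> (\<forall>r R. 0 < r \<and> r \<le> R \<and> R \<le> 1 \<longrightarrow> c * g r \<le> g R))"

definition almost_decreasing :: "(real \<Rightarrow> real) \<Rightarrow> bool" where
  "almost_decreasing g \<longleftrightarrow>
     (\<exists>C. 1 \<le> C \<and> (\<forall>r R. 0 < r \<and> r \<le> R \<and> R \<le> 1 \<longrightarrow> g R \<le> C * g r))"

text \<open>Upper and lower Matuszewska-type indices (extended reals, so that
  the infimum/supremum of an empty set is +/- infinity).\<close>
definition M_idx :: "(real \<Rightarrow> real) \<Rightarrow> ereal" where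
  "M_idx \<psi> = Inf (ereal ` {\<alpha>. almost_decreasing (\<lambda>r. \<psi> r / r powr \<alpha>)})"

definition m_idx :: "(real \<Rightarrow> real) \<Rightarrow> ereal" where
  "m_idx \<psi> = Sup (ereal ` {\<alpha>. almost_increasing (\<lambda>r. \<psi> r / r powr \<alpha>)})"

definition I_idx :: "(real \<Rightarrow> real) \<Rightarrow> ereal set" where
  "I_idx \<psi> = {m_idx \<psi> .. M_idx \<psi>}"

fun dpar :: "'a::euclidean_space list \<Rightarrow> ('a \<Rightarrow> real) \<Rightarrow> 'a \<Rightarrow> real" where
  "dpar [] f = f"
| "dpar (b # bs) f = (\<lambda>x. deriv (\<lambda>t. dpar bs f (x + t *\<^sub>R b)) 0)"

definition dirs :: "nat \<Rightarrow> 'a::euclidean_space list set" where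
  "dirs j = {bs. set bs \<subseteq> Basis \<and> length bs = j}"

definition hol_quot :: "(real \<Rightarrow> real) \<Rightarrow> nat \<Rightarrow> ('a::euclidean_space \<Rightarrow> real) \<Rightarrow> real set" where
  "hol_quot \<psi> k F = {\<bar>F (x + h) - F x\<bar> / (\<psi> (norm h) * norm h powr (- real k)) | x h. 0 < norm h \<and> norm h \<le> 1}"

definition seminorm_psi :: "(real \<Rightarrow> real) \<Rightarrow> nat \<Rightarrow> ('a::euclidean_space \<Rightarrow> real) \<Rightarrow> real" where
  "seminorm_psi \<psi> k F = Sup (hol_quot \<psi> k F)"

definition Cpsi :: "(real \<Rightarrow> real) \<Rightarrow> nat \<Rightarrow> ('a::euclidean_space \<Rightarrow> real) set" where
  "Cpsi \<psi> k = {f.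
     (\<forall>j<k. \<forall>bs\<in>dirs j. \<forall>b\<in>Basis. \<forall>x.
         (\<lambda>t. dpar bs f (x + t *\<^sub>R b)) differentiable (at 0)) \<and>
     (\<forall>j\<le>k. \<forall>bs\<in>dirs j. continuous_on UNIV (dpar bs f) \<and> bounded (range (dpar bs f))) \<and>
     (\<forall>bs\<in>dirs k. bdd_above (hol_quot \<psi> k (dpar bs f)))}"

definition C0norm_j :: "nat \<Rightarrow> ('a::euclidean_space \<Rightarrow> real) \<Rightarrow> real" where
  "C0norm_j j f = Sup {\<bar>dpar bs f x\<bar> | bs x. bs \<in> dirs j}"

definition norm_Cpsi :: "(real \<Rightarrow> real) \<Rightarrow> nat \<Rightarrow> ('a::euclidean_space \<Rightarrow> real) \<Rightarrow> real" where
  "norm_Cpsi \<psi> k f = (\<Sum>j\<le>k. C0norm_j j f) + Max ((\<lambda>bs. seminorm_psi \<psi> k (dpar bs f)) ` dirs k)"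

end

theory Submission
  imports Defs
begin

lemma mvt_abs:
  fixes \<phi> :: "real \<Rightarrow> real"
  assumes "\<And>t. DERIV \<phi> t :> \<phi>' t" "\<And>t. \<bar>\<phi>' t\<bar> \<le> B"
  shows "\<bar>\<phi> a - \<phi> 0\<bar> \<le> B * \<bar>a\<bar>"
proof (cases "a = 0")
  case True then show ?thesis by simp
next
  case False
  show ?thesis
  proof (cases "0 < a")
    case True
    obtain z where "\<phi> a - \<phi> 0 = (a - 0) * \<phi>' z" using MVT2[OF True assms(1)] by blast
    then show ?thesis using assms(2)[of z] True by (simp add: abs_mult mult.commute mult_right_mono)
  next
    case False
    with \<open>a \<noteq> 0\<close> have "a < 0" by simp
    obtain z where "\<phi> 0 - \<phi> a = (0 - a) * \<phi>' z" using MVT2[OF \<open>a<0\<close> assms(1)] by blast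
    then have "\<bar>\<phi> a - \<phi> 0\<bar> = \<bar>a\<bar> * \<bar>\<phi>' z\<bar>" by (simp add: abs_mult abs_minus_commute)
    then show ?thesis using assms(2)[of z] mult_left_mono[of "\<bar>\<phi>' z\<bar>" B "\<bar>a\<bar>"] by (simp add: mult.commute)
  qed
qed

lemma line_deriv:
  fixes u :: "'a::euclidean_space \<Rightarrow> real"
  assumes "(\<lambda>s. u (z + s *\<^sub>R i)) differentiable (at 0)" and that: "z = y + t *\<^sub>R i"
  shows "DERIV (\<lambda>t. u (y + t *\<^sub>R i)) t :> deriv (\<lambda>s. u (z + s *\<^sub>R i)) 0"
proof -
  have "DERIV (\<lambda>s. u (z + s *\<^sub>R i)) 0 :> deriv (\<lambda>s. u (z + s *\<^sub>R i)) 0"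
    using assms DERIV_deriv_iff_real_differentiable by blast
  moreover have "(\<lambda>s. u (z + s *\<^sub>R i)) = (\<lambda>s. (\<lambda>t. u (y + t *\<^sub>R i)) (s + t))"
    using that by (auto simp: scaleR_add_left algebra_simps)
  ultimately show ?thesis using DERIV_shift[of "\<lambda>t. u (y + t *\<^sub>R i)" _ 0 t] by simp
qed

lemma lip_partial:
  fixes u :: "'a::euclidean_space \<Rightarrow> real"
  assumes d: "\<And>y i. i \<in> Basis \<Longrightarrow> (\<lambda>t. u (y + t *\<^sub>R i)) differentiable (at 0)"
    and b: "\<And>y i. i \<in> Basis \<Longrightarrow> \<bar>deriv (\<lambda>t. u (y + t *\<^sub>R i)) 0\<bar> \<le> B"
  shows "\<bar>u (x + h) - u x\<bar> \<le> real DIM('a) * B * norm h"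
proof -
  have one: "\<bar>u (y + a *\<^sub>R i) - u y\<bar> \<le> B * norm h" if "i \<in> Basis" "\<bar>a\<bar> \<le> norm h" for y a i
  proof -
    have "\<bar>(\<lambda>t. u (y + t *\<^sub>R i)) a - (\<lambda>t. u (y + t *\<^sub>R i)) 0\<bar> \<le> B * \<bar>a\<bar>"
      apply (rule mvt_abs[where \<phi>' = "\<lambda>t. deriv (\<lambda>s. u ((y + t *\<^sub>R i) + s *\<^sub>R i)) 0"])
      using line_deriv d b that by blast+
    moreover have "0 \<le> B" using b[OF that(1), of y] by linarith
    ultimately show ?thesis using that(2) by (simp add: order_trans mult_left_mono)
  qed
  have gen: "finite S \<Longrightarrow> S \<subseteq> Basis \<Longrightarrow> (\<forall>x. \<bar>u (x + (\<Sum>i\<in>S. (h \<bullet> i) *\<^sub>R i)) - u x\<bar> \<le> real (card S) * B * norm h)" for S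
  proof (induction S rule: finite_induct)
    case empty then show ?case by simp
  next
    case (insert i S)
    show ?case
    proof
      fix x
      let ?y = "x + (\<Sum>i\<in>S. (h \<bullet> i) *\<^sub>R i)"
      have e: "x + (\<Sum>i\<in>insert i S. (h \<bullet> i) *\<^sub>R i) = ?y + (h \<bullet> i) *\<^sub>R i"
        using insert by (simp add: algebra_simps)
      have "\<bar>u (?y + (h \<bullet> i) *\<^sub>R i) - u ?y\<bar> \<le> B * norm h"
        using one[of i "h \<bullet> i"] insert Basis_le_norm[of i h] by auto
      moreover have "\<bar>u ?y - u x\<bar> \<le> real (card S) * B * norm h" using insert by auto
      ultimately show "\<bar>u (x + (\<Sum>i\<in>insert i S. (h \<bullet> i) *\<^sub>R i)) - u x\<bar> \<le> real (card (insert i S)) * B * norm h"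
        unfolding e using insert(1,2) by (simp add: algebra_simps)
    qed
  qed
  show ?thesis using gen[of Basis] by (simp add: euclidean_representation)
qed


fun leib :: "'a list \<Rightarrow> ('a list \<times> 'a list) list" where
  "leib [] = [([],[])]"
| "leib (b # bs) = concat (map (\<lambda>(p,q). [(b#p,q),(p,b#q)]) (leib bs))"

lemma sum_list_concat2:
  "sum_list (map F (concat (map (\<lambda>(p,q). [(b#p,q),(p,b#q)]) L))) =
   sum_list (map (\<lambda>(p,q). F (b#p,q) + F (p,b#q)) L)"
  by (induction L) auto

lemma length_leib: "length (leib bs) = 2 ^ length bs"
proof (induction bs)
  case Nil then show ?case by simp
next
  case (Cons b bs)
  have "length (concat (map (\<lambda>(p,q). [(b#p,q),(p,b#q)]) L)) = 2 * length L" for L :: "('a list \<times> 'a list) list"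
    by (induction L) auto
  then show ?case using Cons by simp
qed

lemma set_leib: "(p,q) \<in> set (leib bs) \<Longrightarrow> length p + length q = length bs \<and> set p \<subseteq> set bs \<and> set q \<subseteq> set bs"
proof (induction bs arbitrary: p q)
  case Nil then show ?case by simp
next
  case (Cons b bs)
  then obtain p' q' where pq: "(p',q') \<in> set (leib bs)" "(p,q) = (b#p',q') \<or> (p,q) = (p',b#q')"
    by auto
  from Cons.IH[OF pq(1)] pq(2) show ?case by auto
qed

lemma sum_list_deriv:
  assumes "\<And>pq. pq \<in> set L \<Longrightarrow> ((U pq) has_real_derivative U' pq) (at 0) \<and> ((V pq) has_real_derivative V' pq) (at 0)"
  shows "((\<lambda>t. sum_list (map (\<lambda>pq. U pq t * V pq t) L)) has_real_derivative
           sum_list (map (\<lambda>pq. U' pq * V pq 0 + U pq 0 * V' pq) L)) (at 0)"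
  using assms
proof (induction L)
  case Nil then show ?case by simp
next
  case (Cons a L)
  have "((\<lambda>t. U a t * V a t) has_real_derivative U' a * V a 0 + U a 0 * V' a) (at 0)"
    using Cons.prems[of a] by (auto intro!: derivative_eq_intros)
  moreover have "((\<lambda>t. sum_list (map (\<lambda>pq. U pq t * V pq t) L)) has_real_derivative
           sum_list (map (\<lambda>pq. U' pq * V pq 0 + U pq 0 * V' pq) L)) (at 0)"
    using Cons by auto
  ultimately show ?case by (simp add: DERIV_add)
qed

lemma leibniz:
  fixes f g :: "'a::euclidean_space \<Rightarrow> real"
  assumes df: "\<And>p b x. set p \<subseteq> Basis \<Longrightarrow> length p < k \<Longrightarrow> b \<in> Basis \<Longrightarrow> (\<lambda>t. dpar p f (x + t *\<^sub>R b)) differentiable (at 0)"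
    and dg: "\<And>p b x. set p \<subseteq> Basis \<Longrightarrow> length p < k \<Longrightarrow> b \<in> Basis \<Longrightarrow> (\<lambda>t. dpar p g (x + t *\<^sub>R b)) differentiable (at 0)"
  shows "set bs \<subseteq> Basis \<Longrightarrow> length bs \<le> k \<Longrightarrow>
    dpar bs (\<lambda>x. f x * g x) = (\<lambda>x. sum_list (map (\<lambda>(p,q). dpar p f x * dpar q g x) (leib bs)))"
proof (induction bs)
  case Nil then show ?case by simp
next
  case (Cons b bs)
  then have IH: "dpar bs (\<lambda>x. f x * g x) = (\<lambda>x. sum_list (map (\<lambda>(p,q). dpar p f x * dpar q g x) (leib bs)))"
    and b: "b \<in> Basis" and lt: "length bs < k" and sb: "set bs \<subseteq> Basis" by auto
  show ?case
  proof
    fix x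
    let ?U = "\<lambda>pq t. dpar (fst pq) f (x + t *\<^sub>R b)"
    let ?V = "\<lambda>pq t. dpar (snd pq) g (x + t *\<^sub>R b)"
    have D: "((\<lambda>t. sum_list (map (\<lambda>pq. ?U pq t * ?V pq t) (leib bs))) has_real_derivative
           sum_list (map (\<lambda>pq. deriv (?U pq) 0 * ?V pq 0 + ?U pq 0 * deriv (?V pq) 0) (leib bs))) (at 0)"
    proof (rule sum_list_deriv)
      fix pq assume "pq \<in> set (leib bs)"
      moreover obtain p q where "pq = (p,q)" by force
      ultimately have "length p + length q = length bs \<and> set p \<subseteq> set bs \<and> set q \<subseteq> set bs"
        using set_leib by blast
      then have "(?U pq) differentiable (at 0)" "(?V pq) differentiable (at 0)"
        using df[of p b x] dg[of q b x] \<open>pq = (p,q)\<close> lt sb b by auto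
      then show "(?U pq has_real_derivative deriv (?U pq) 0) (at 0) \<and> (?V pq has_real_derivative deriv (?V pq) 0) (at 0)"
        using DERIV_deriv_iff_real_differentiable by blast
    qed
    have "dpar (b # bs) (\<lambda>x. f x * g x) x = deriv (\<lambda>t. sum_list (map (\<lambda>pq. ?U pq t * ?V pq t) (leib bs))) 0"
      by (simp add: IH split_def)
    also have "\<dots> = sum_list (map (\<lambda>pq. deriv (?U pq) 0 * ?V pq 0 + ?U pq 0 * deriv (?V pq) 0) (leib bs))"
      using D DERIV_imp_deriv by blast
    also have "\<dots> = sum_list (map (\<lambda>(p,q). dpar p f x * dpar q g x) (leib (b # bs)))"
      unfolding leib.simps sum_list_concat2 by (simp add: split_def)
    finally show "dpar (b # bs) (\<lambda>x. f x * g x) x = sum_list (map (\<lambda>(p,q). dpar p f x * dpar q g x) (leib (b # bs)))" .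
  qed
qed


lemma dirs_finite: "finite (dirs j :: 'a::euclidean_space list set)"
  unfolding dirs_def using finite_lists_length_eq[OF finite_Basis] .

lemma dirs_ne: "dirs j \<noteq> ({} :: 'a::euclidean_space list set)"
proof -
  obtain b :: 'a where "b \<in> Basis" using nonempty_Basis by blast
  then have "replicate j b \<in> dirs j" unfolding dirs_def by auto
  then show ?thesis by blast
qed

lemma C0_bound:
  assumes f: "f \<in> Cpsi \<psi> k" and bs: "bs \<in> dirs j" and j: "j \<le> k"
  shows "\<bar>dpar bs f x\<bar> \<le> C0norm_j j f"
proof -
  have eq: "{\<bar>dpar bs f x\<bar> | bs x. bs \<in> dirs j} = (\<Union>bs\<in>dirs j. range (\<lambda>x. \<bar>dpar bs f x\<bar>))" by auto
  have bd: "bdd_above (range (\<lambda>x. \<bar>dpar bs f x\<bar>))" if "bs \<in> dirs j" for bs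
  proof -
    have "bounded (range (dpar bs f))" using f that j unfolding Cpsi_def by auto
    then obtain a where "\<forall>y\<in>range (dpar bs f). norm y \<le> a" unfolding bounded_iff by blast
    then show ?thesis by (auto intro!: bdd_aboveI[where M=a])
  qed
  then have bda: "bdd_above {\<bar>dpar bs f x\<bar> | bs x. bs \<in> dirs j}" unfolding eq bdd_above_UN[OF dirs_finite] by (intro ballI bd)
  have mem: "\<bar>dpar bs f x\<bar> \<in> {\<bar>dpar bs f x\<bar> | bs x. bs \<in> dirs j}" using bs by blast
  show ?thesis unfolding C0norm_j_def using cSup_upper[OF mem bda] .
qed

lemma C0_nonneg:
  assumes "f \<in> Cpsi \<psi> k" "j \<le> k" shows "0 \<le> C0norm_j j f"
proof -
  obtain bs where "bs \<in> (dirs j :: 'a list set)" using dirs_ne by blast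
  then show ?thesis using C0_bound[OF assms(1) _ assms(2), of bs 0] by linarith
qed

lemma hol_quot_ne: "hol_quot \<psi> k (F :: 'a::euclidean_space \<Rightarrow> real) \<noteq> {}"
proof -
  obtain b :: 'a where "b \<in> Basis" using nonempty_Basis by blast
  then have "norm b = 1" by simp
  then have "(\<bar>F (0 + b) - F 0\<bar> / (\<psi> (norm b) * norm b powr - real k)) \<in> hol_quot \<psi> k F"
    unfolding hol_quot_def by (intro CollectI exI[of _ 0] exI[of _ b]) simp
  then show ?thesis by blast
qed

lemma hol_quot_nonneg:
  assumes pos: "\<forall>r. 0 < r \<and> r \<le> 1 \<longrightarrow> 0 < \<psi> r" and "y \<in> hol_quot \<psi> k F"
  shows "0 \<le> y"
proof -
  obtain x h where y: "y = \<bar>F (x + h) - F x\<bar> / (\<psi> (norm h) * norm h powr - real k)" "0 < norm h" "norm h \<le> 1"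
    using assms(2) unfolding hol_quot_def by blast
  have "0 < \<psi> (norm h)" using pos y by auto
  moreover have "0 < norm h powr - real k" using y by simp
  ultimately show ?thesis unfolding y(1) by (intro divide_nonneg_pos mult_pos_pos) auto
qed

lemma semi_props:
  assumes pos: "\<forall>r. 0 < r \<and> r \<le> 1 \<longrightarrow> 0 < \<psi> r" and f: "f \<in> Cpsi \<psi> k" and bs: "bs \<in> dirs k"
  shows "0 \<le> seminorm_psi \<psi> k (dpar bs f)"
    and "y \<in> hol_quot \<psi> k (dpar bs f) \<Longrightarrow> y \<le> seminorm_psi \<psi> k (dpar bs f)"
proof -
  have bdd: "bdd_above (hol_quot \<psi> k (dpar bs f))" using f bs unfolding Cpsi_def by auto
  show "y \<in> hol_quot \<psi> k (dpar bs f) \<Longrightarrow> y \<le> seminorm_psi \<psi> k (dpar bs f)"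
    unfolding seminorm_psi_def using cSup_upper[OF _ bdd] by blast
  obtain y where y: "y \<in> hol_quot \<psi> k (dpar bs f)" using hol_quot_ne by blast
  have "y \<le> seminorm_psi \<psi> k (dpar bs f)"
    unfolding seminorm_psi_def using cSup_upper[OF y bdd] .
  then show "0 \<le> seminorm_psi \<psi> k (dpar bs f)" using hol_quot_nonneg[OF pos y] by linarith
qed

lemma norm_props:
  assumes pos: "\<forall>r. 0 < r \<and> r \<le> 1 \<longrightarrow> 0 < \<psi> r" and f: "f \<in> Cpsi \<psi> k"
  shows "\<And>j. j \<le> k \<Longrightarrow> C0norm_j j f \<le> norm_Cpsi \<psi> k f"
    and "\<And>bs. bs \<in> dirs k \<Longrightarrow> seminorm_psi \<psi> k (dpar bs f) \<le> norm_Cpsi \<psi> k f"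
    and "0 \<le> norm_Cpsi \<psi> k f"
proof -
  let ?M = "Max ((\<lambda>bs. seminorm_psi \<psi> k (dpar bs f)) ` (dirs k :: 'a list set))"
  have fin: "finite ((\<lambda>bs. seminorm_psi \<psi> k (dpar bs f)) ` (dirs k :: 'a list set))"
    using dirs_finite by blast
  have Mge: "seminorm_psi \<psi> k (dpar bs f) \<le> ?M" if "bs \<in> dirs k" for bs
    using fin that by (intro Max_ge) auto
  obtain bs0 where bs0: "bs0 \<in> (dirs k :: 'a list set)" using dirs_ne by blast
  have M0: "0 \<le> ?M" using Mge[OF bs0] semi_props(1)[OF pos f bs0] by linarith
  have S0: "0 \<le> (\<Sum>j\<le>k. C0norm_j j f)" using C0_nonneg[OF f] by (intro sum_nonneg) auto
  show "0 \<le> norm_Cpsi \<psi> k f" unfolding norm_Cpsi_def using M0 S0 by linarith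
  show "\<And>bs. bs \<in> dirs k \<Longrightarrow> seminorm_psi \<psi> k (dpar bs f) \<le> norm_Cpsi \<psi> k f"
    unfolding norm_Cpsi_def using Mge S0 by fastforce
  fix j assume j: "j \<le> k"
  have "C0norm_j j f \<le> (\<Sum>j\<le>k. C0norm_j j f)"
    using j C0_nonneg[OF f] by (intro member_le_sum) auto
  then show "C0norm_j j f \<le> norm_Cpsi \<psi> k f" unfolding norm_Cpsi_def using M0 by linarith
qed

lemma index_bound:
  fixes \<psi> :: "real \<Rightarrow> real" and k :: nat
  assumes pos: "\<forall>r. 0 < r \<and> r \<le> 1 \<longrightarrow> 0 < \<psi> r"
    and one: "\<psi> 1 = 1"
    and I: "I_idx \<psi> \<subseteq> {ereal (real k) <..< ereal (real k + 1)}"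
  shows "\<exists>K>0. \<forall>r. 0 < r \<and> r \<le> 1 \<longrightarrow> r powr (real k + 1) \<le> K * \<psi> r"
proof -
  define Inc where "Inc = {\<alpha>. almost_increasing (\<lambda>r. \<psi> r / r powr \<alpha>)}"
  define Dec where "Dec = {\<alpha>. almost_decreasing (\<lambda>r. \<psi> r / r powr \<alpha>)}"
  have le: "\<alpha> \<le> \<beta>" if a: "\<alpha> \<in> Inc" and b: "\<beta> \<in> Dec" for \<alpha> \<beta>
  proof (rule ccontr)
    assume "\<not> \<alpha> \<le> \<beta>"
    then have e: "0 < \<alpha> - \<beta>" by simp
    obtain c where c: "0 < c" "\<forall>r R. 0 < r \<and> r \<le> R \<and> R \<le> 1 \<longrightarrow> c * (\<psi> r / r powr \<alpha>) \<le> \<psi> R / R powr \<alpha>"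
      using a unfolding Inc_def almost_increasing_def by auto
    obtain C where C: "1 \<le> C" "\<forall>r R. 0 < r \<and> r \<le> R \<and> R \<le> 1 \<longrightarrow> \<psi> R / R powr \<beta> \<le> C * (\<psi> r / r powr \<beta>)"
      using b unfolding Dec_def almost_decreasing_def by auto
    define r where "r = min 1 ((c / (2*C)) powr (1/(\<alpha> - \<beta>)))"
    have r0: "0 < r" "r \<le> 1" unfolding r_def using c C by auto
    have h1: "c * (\<psi> r / r powr \<alpha>) \<le> 1" using c(2)[rule_format, of r 1] r0 one by simp
    have h2: "1 \<le> C * (\<psi> r / r powr \<beta>)" using C(2)[rule_format, of r 1] r0 one by simp
    have pr: "0 < r powr \<alpha>" "0 < r powr \<beta>" using r0 by auto
    have "c * \<psi> r \<le> r powr \<alpha>" using h1 pr by (simp add: field_simps)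
    moreover have "r powr \<beta> \<le> C * \<psi> r" using h2 pr by (simp add: field_simps)
    ultimately have "c * r powr \<beta> \<le> C * r powr \<alpha>"
      using c C by (smt (verit, best) mult_left_mono mult.left_commute)
    moreover have "r powr \<alpha> = r powr \<beta> * r powr (\<alpha> - \<beta>)" by (simp add: powr_add[symmetric])
    ultimately have "c \<le> C * r powr (\<alpha> - \<beta>)" using pr by (simp add: field_simps)
    moreover have "r powr (\<alpha> - \<beta>) \<le> ((c / (2*C)) powr (1/(\<alpha> - \<beta>))) powr (\<alpha> - \<beta>)"
      using r0 e unfolding r_def by (intro powr_mono2) auto
    moreover have "((c / (2*C)) powr (1/(\<alpha> - \<beta>))) powr (\<alpha> - \<beta>) = c / (2*C)"
      using e c C by (simp add: powr_powr)
    ultimately have "c \<le> C * (c / (2*C))" using C by (smt (verit) mult_left_mono)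
    then show False using c C by (simp add: field_simps)
  qed
  have mM: "m_idx \<psi> \<le> M_idx \<psi>"
    unfolding m_idx_def M_idx_def Inc_def[symmetric] Dec_def[symmetric]
    by (intro Sup_least Inf_greatest) (auto intro: le)
  then have "M_idx \<psi> \<in> I_idx \<psi>" unfolding I_idx_def by auto
  with I have "M_idx \<psi> < ereal (real k + 1)" by auto
  then obtain \<alpha> where a: "\<alpha> \<in> Dec" "ereal \<alpha> < ereal (real k + 1)"
    unfolding M_idx_def Dec_def[symmetric] Inf_less_iff by auto
  then have ak: "\<alpha> \<le> real k + 1" by simp
  obtain C where C: "1 \<le> C" "\<forall>r R. 0 < r \<and> r \<le> R \<and> R \<le> 1 \<longrightarrow> \<psi> R / R powr \<alpha> \<le> C * (\<psi> r / r powr \<alpha>)"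
    using a(1) unfolding Dec_def almost_decreasing_def by auto
  have "r powr (real k + 1) \<le> C * \<psi> r" if r: "0 < r" "r \<le> 1" for r
  proof -
    have "1 \<le> C * (\<psi> r / r powr \<alpha>)" using C(2)[rule_format, of r 1] r one by simp
    then have "r powr \<alpha> \<le> C * \<psi> r" using r by (simp add: field_simps)
    moreover have "r powr (real k + 1) \<le> r powr \<alpha>" using r ak by (intro powr_mono') auto
    ultimately show ?thesis by linarith
  qed
  then show ?thesis using C(1) by (intro exI[of _ C]) auto
qed


lemma sum_list_abs_bound:
  assumes "\<And>x. x \<in> set xs \<Longrightarrow> \<bar>F x\<bar> \<le> (B::real)"
  shows "\<bar>sum_list (map F xs)\<bar> \<le> real (length xs) * B"
  using assms
proof (induction xs)
  case Nil then show ?case by simp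
next
  case (Cons a xs)
  have "\<bar>sum_list (map F (a # xs))\<bar> \<le> \<bar>F a\<bar> + \<bar>sum_list (map F xs)\<bar>" by simp
  also have "\<dots> \<le> B + real (length xs) * B" using Cons by (intro add_mono) auto
  finally show ?case by (simp add: algebra_simps)
qed

lemma prod_diff_bound:
  fixes u u' v v' :: real
  assumes "\<bar>u' - u\<bar> \<le> a" "\<bar>v'\<bar> \<le> b" "\<bar>u\<bar> \<le> c" "\<bar>v' - v\<bar> \<le> e"
  shows "\<bar>u' * v' - u * v\<bar> \<le> a * b + c * e"
proof -
  have "u' * v' - u * v = (u' - u) * v' + u * (v' - v)" by (simp add: algebra_simps)
  then have "\<bar>u' * v' - u * v\<bar> \<le> \<bar>u' - u\<bar> * \<bar>v'\<bar> + \<bar>u\<bar> * \<bar>v' - v\<bar>"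
    by (simp add: abs_mult[symmetric] abs_triangle_ineq)
  also have "\<dots> \<le> a * b + c * e" using assms by (intro add_mono mult_mono) auto
  finally show ?thesis .
qed

theorem lemma2p7:
  fixes \<psi> :: "real \<Rightarrow> real" and k :: nat
  assumes "\<forall>r. 0 < r \<and> r \<le> 1 \<longrightarrow> 0 < \<psi> r"
    and "\<psi> 1 = 1"
    and "(\<psi> \<longlongrightarrow> 0) (at_right 0)"
    and "0 < k"
    and "I_idx \<psi> \<subseteq> {ereal (real k) <..< ereal (real k + 1)}"
  shows "\<exists>c1>0. \<forall>f g :: 'a::euclidean_space \<Rightarrow> real.
           f \<in> Cpsi \<psi> k \<longrightarrow> g \<in> Cpsi \<psi> k \<longrightarrow>
           norm_Cpsi \<psi> k (\<lambda>x. f x * g x) \<le> c1 * norm_Cpsi \<psi> k f * norm_Cpsi \<psi> k g"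
proof -
  note pos = assms(1)
  obtain K where K: "K > 0" "\<And>r. 0 < r \<Longrightarrow> r \<le> 1 \<Longrightarrow> r powr (real k + 1) \<le> K * \<psi> r"
    using index_bound[OF assms(1,2,5)] by blast
  define d where "d = real DIM('a)"
  define A where "A = 1 + d * K"
  have d0: "0 \<le> d" unfolding d_def by simp
  have A1: "1 \<le> A" unfolding A_def using d0 K by simp
  have dKA: "d * K \<le> A" unfolding A_def by simp
  define Q where "Q = (\<lambda>h::'a. \<psi> (norm h) * norm h powr - real k)"
  have Qpos: "0 < Q h" if "0 < norm h" "norm h \<le> 1" for h
    unfolding Q_def using that pos by (intro mult_pos_pos) auto
  have hK: "norm h \<le> K * Q h" if h: "0 < norm h" "norm h \<le> 1" for h :: 'a
  proof -
    have "norm h = norm h powr (real k + 1) * norm h powr - real k"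
      using h by (simp add: powr_add[symmetric])
    also have "\<dots> \<le> K * \<psi> (norm h) * norm h powr - real k"
      using K(2)[OF h] by (intro mult_right_mono) auto
    finally show ?thesis unfolding Q_def by (simp add: mult.assoc)
  qed
  have diffb: "\<bar>dpar p f (x + h) - dpar p f x\<bar> \<le> A * norm_Cpsi \<psi> k f * Q h"
    if f: "f \<in> Cpsi \<psi> k" and p: "p \<in> dirs j" and j: "j \<le> k" and h: "0 < norm h" "norm h \<le> 1"
    for f :: "'a \<Rightarrow> real" and p j x h
  proof -
    have N0: "0 \<le> norm_Cpsi \<psi> k f" using norm_props(3)[OF pos f] .
    have NQ: "0 \<le> norm_Cpsi \<psi> k f * Q h" using N0 Qpos[OF h] by simp
    show ?thesis
    proof (cases "j = k")
      case True
      then have pk: "p \<in> dirs k" using p by simp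
      have "\<bar>dpar p f (x + h) - dpar p f x\<bar> / Q h \<in> hol_quot \<psi> k (dpar p f)"
        unfolding hol_quot_def Q_def using h by blast
      then have "\<bar>dpar p f (x + h) - dpar p f x\<bar> / Q h \<le> norm_Cpsi \<psi> k f"
        using semi_props(2)[OF pos f pk] norm_props(2)[OF pos f pk] by fastforce
      then have "\<bar>dpar p f (x + h) - dpar p f x\<bar> \<le> norm_Cpsi \<psi> k f * Q h"
        using Qpos[OF h] by (simp add: pos_divide_le_eq)
      also have "\<dots> \<le> A * (norm_Cpsi \<psi> k f * Q h)" using A1 NQ by (simp add: mult_left_mono_neg mult_le_cancel_right1)
      finally show ?thesis by (simp add: mult.assoc)
    next
      case False
      then have jk: "j < k" using j by simp
      have sp: "set p \<subseteq> Basis" "length p = j" using p unfolding dirs_def by auto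
      have "\<bar>dpar p f (x + h) - dpar p f x\<bar> \<le> d * norm_Cpsi \<psi> k f * norm h"
        unfolding d_def
      proof (rule lip_partial)
        fix y and i :: 'a assume i: "i \<in> Basis"
        show "(\<lambda>t. dpar p f (y + t *\<^sub>R i)) differentiable (at 0)"
          using f p jk i unfolding Cpsi_def by blast
        have ip: "i # p \<in> dirs (Suc j)" using sp i unfolding dirs_def by auto
        have "\<bar>dpar (i # p) f y\<bar> \<le> C0norm_j (Suc j) f" using C0_bound[OF f ip] jk by simp
        also have "\<dots> \<le> norm_Cpsi \<psi> k f" using norm_props(1)[OF pos f] jk by simp
        finally show "\<bar>deriv (\<lambda>t. dpar p f (y + t *\<^sub>R i)) 0\<bar> \<le> norm_Cpsi \<psi> k f" by simp
      qed
      also have "\<dots> \<le> d * norm_Cpsi \<psi> k f * (K * Q h)"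
        using hK[OF h] d0 N0 by (intro mult_left_mono) auto
      also have "\<dots> = (d * K) * (norm_Cpsi \<psi> k f * Q h)" by (simp add: algebra_simps)
      also have "\<dots> \<le> A * (norm_Cpsi \<psi> k f * Q h)" using dKA NQ by (intro mult_right_mono) auto
      finally show ?thesis by (simp add: mult.assoc)
    qed
  qed
  define c1 where "c1 = real (k + 1) * 2 ^ k + 2 ^ k * (2 * A)"
  have c1pos: "0 < c1" unfolding c1_def using A1 by (simp add: add_pos_nonneg)
  show ?thesis
  proof (intro exI[of _ c1] conjI allI impI c1pos)
    fix f g :: "'a \<Rightarrow> real"
    assume f: "f \<in> Cpsi \<psi> k" and g: "g \<in> Cpsi \<psi> k"
    define Nf where "Nf = norm_Cpsi \<psi> k f"
    define Ng where "Ng = norm_Cpsi \<psi> k g"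
    have Nf0: "0 \<le> Nf" and Ng0: "0 \<le> Ng" unfolding Nf_def Ng_def using norm_props(3)[OF pos] f g by auto
    have df: "\<And>p b x. set p \<subseteq> Basis \<Longrightarrow> length p < k \<Longrightarrow> b \<in> Basis \<Longrightarrow> (\<lambda>t. dpar p f (x + t *\<^sub>R b)) differentiable (at 0)"
      using f unfolding Cpsi_def dirs_def by blast
    have dg: "\<And>p b x. set p \<subseteq> Basis \<Longrightarrow> length p < k \<Longrightarrow> b \<in> Basis \<Longrightarrow> (\<lambda>t. dpar p g (x + t *\<^sub>R b)) differentiable (at 0)"
      using g unfolding Cpsi_def dirs_def by blast
    have L: "dpar bs (\<lambda>x. f x * g x) = (\<lambda>x. sum_list (map (\<lambda>(p,q). dpar p f x * dpar q g x) (leib bs)))"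
      if a1: "set bs \<subseteq> Basis" and a2: "length bs \<le> k" for bs
      by (rule leibniz[where k=k and f=f and g=g]) (simp_all add: df dg a1 a2)
    have pq_dirs: "p \<in> dirs (length p) \<and> q \<in> dirs (length q) \<and> length p \<le> k \<and> length q \<le> k \<and> length p + length q = length bs"
      if "(p,q) \<in> set (leib bs)" "bs \<in> dirs j" "j \<le> k" for p q bs j
      using set_leib[OF that(1)] that(2,3) unfolding dirs_def by auto
    have Cf: "\<bar>dpar p f x\<bar> \<le> Nf" if "p \<in> dirs j" "j \<le> k" for p j x
      using C0_bound[OF f that, of x] norm_props(1)[OF pos f that(2)] unfolding Nf_def by linarith
    have Cg: "\<bar>dpar p g x\<bar> \<le> Ng" if "p \<in> dirs j" "j \<le> k" for p j x
      using C0_bound[OF g that, of x] norm_props(1)[OF pos g that(2)] unfolding Ng_def by linarith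
    have C0fg: "C0norm_j j (\<lambda>x. f x * g x) \<le> 2 ^ k * (Nf * Ng)" if j: "j \<le> k" for j
      unfolding C0norm_j_def
    proof (rule cSup_least)
      show "{\<bar>dpar bs (\<lambda>x. f x * g x) x\<bar> |bs x. bs \<in> dirs j} \<noteq> {}" using dirs_ne by blast
      fix y assume "y \<in> {\<bar>dpar bs (\<lambda>x. f x * g x) x\<bar> |bs x. bs \<in> dirs j}"
      then obtain bs x where y: "y = \<bar>dpar bs (\<lambda>x. f x * g x) x\<bar>" and bs: "bs \<in> dirs j" by blast
      have sb: "set bs \<subseteq> Basis" "length bs = j" using bs unfolding dirs_def by auto
      have "y = \<bar>sum_list (map (\<lambda>(p,q). dpar p f x * dpar q g x) (leib bs))\<bar>"
        using sb j by (simp add: y L[OF sb(1)])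
      also have "\<dots> \<le> real (length (leib bs)) * (Nf * Ng)"
      proof (rule sum_list_abs_bound)
        fix pq assume "pq \<in> set (leib bs)"
        then obtain p q where pq: "pq = (p,q)" "(p,q) \<in> set (leib bs)" by (metis prod.exhaust)
        note P = pq_dirs[OF pq(2) bs j]
        show "\<bar>case pq of (p, q) \<Rightarrow> dpar p f x * dpar q g x\<bar> \<le> Nf * Ng"
        proof -
          have a: "\<bar>dpar p f x\<bar> \<le> Nf" using Cf[of p "length p" x] P by blast
          have b: "\<bar>dpar q g x\<bar> \<le> Ng" using Cg[of q "length q" x] P by blast
          have "\<bar>dpar p f x\<bar> * \<bar>dpar q g x\<bar> \<le> Nf * Ng"
            using a b by (intro mult_mono) (auto simp: Nf0)
          then show ?thesis unfolding pq(1) by (simp add: abs_mult)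
        qed
      qed
      also have "\<dots> \<le> 2 ^ k * (Nf * Ng)"
        using sb j Nf0 Ng0 by (simp add: length_leib mult_right_mono)
      finally show "y \<le> 2 ^ k * (Nf * Ng)" .
    qed
    have S1: "(\<Sum>j\<le>k. C0norm_j j (\<lambda>x. f x * g x)) \<le> real (k + 1) * 2 ^ k * (Nf * Ng)"
    proof -
      have "(\<Sum>j\<le>k. C0norm_j j (\<lambda>x. f x * g x)) \<le> (\<Sum>j\<le>k. 2 ^ k * (Nf * Ng))"
        using C0fg by (intro sum_mono) auto
      then show ?thesis by simp
    qed
    have semfg: "seminorm_psi \<psi> k (dpar bs (\<lambda>x. f x * g x)) \<le> 2 ^ k * (2 * A) * (Nf * Ng)"
      if bs: "bs \<in> dirs k" for bs
      unfolding seminorm_psi_def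
    proof (rule cSup_least)
      show "hol_quot \<psi> k (dpar bs (\<lambda>x. f x * g x)) \<noteq> {}" by (rule hol_quot_ne)
      fix y assume "y \<in> hol_quot \<psi> k (dpar bs (\<lambda>x. f x * g x))"
      then obtain x h where y: "y = \<bar>dpar bs (\<lambda>x. f x * g x) (x + h) - dpar bs (\<lambda>x. f x * g x) x\<bar> / Q h"
        and h: "0 < norm h" "norm h \<le> 1"
        unfolding hol_quot_def Q_def by blast
      have sb: "set bs \<subseteq> Basis" "length bs = k" using bs unfolding dirs_def by auto
      let ?F = "\<lambda>(p,q). dpar p f (x + h) * dpar q g (x + h) - dpar p f x * dpar q g x"
      have "dpar bs (\<lambda>x. f x * g x) (x + h) - dpar bs (\<lambda>x. f x * g x) x
          = sum_list (map ?F (leib bs))"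
        using sb by (simp add: L[OF sb(1)] sum_list_subtractf[symmetric] split_def)
      then have "\<bar>dpar bs (\<lambda>x. f x * g x) (x + h) - dpar bs (\<lambda>x. f x * g x) x\<bar>
          \<le> real (length (leib bs)) * (2 * A * (Nf * Ng) * Q h)"
      proof -
        assume e: "dpar bs (\<lambda>x. f x * g x) (x + h) - dpar bs (\<lambda>x. f x * g x) x = sum_list (map ?F (leib bs))"
        show ?thesis unfolding e
        proof (rule sum_list_abs_bound)
          fix pq assume "pq \<in> set (leib bs)"
          then obtain p q where pq: "pq = (p,q)" "(p,q) \<in> set (leib bs)" by (metis prod.exhaust)
          note P = pq_dirs[OF pq(2) bs order.refl]
          have "\<bar>?F (p,q)\<bar> \<le> (A * Nf * Q h) * Ng + Nf * (A * Ng * Q h)"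
            unfolding split_conv
          proof (rule prod_diff_bound)
            show "\<bar>dpar p f (x + h) - dpar p f x\<bar> \<le> A * Nf * Q h"
              using diffb[OF f, of p "length p" h x] P h unfolding Nf_def by blast
            show "\<bar>dpar q g (x + h) - dpar q g x\<bar> \<le> A * Ng * Q h"
              using diffb[OF g, of q "length q" h x] P h unfolding Ng_def by blast
            show "\<bar>dpar q g (x + h)\<bar> \<le> Ng" using Cg[of q "length q" "x + h"] P by blast
            show "\<bar>dpar p f x\<bar> \<le> Nf" using Cf[of p "length p" x] P by blast
          qed
          then show "\<bar>?F pq\<bar> \<le> 2 * A * (Nf * Ng) * Q h" unfolding pq(1) by (simp add: algebra_simps)
        qed
      qed
      then have "\<bar>dpar bs (\<lambda>x. f x * g x) (x + h) - dpar bs (\<lambda>x. f x * g x) x\<bar>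
          \<le> 2 ^ k * (2 * A) * (Nf * Ng) * Q h"
        using sb by (simp add: length_leib algebra_simps)
      then show "y \<le> 2 ^ k * (2 * A) * (Nf * Ng)"
        unfolding y using Qpos[OF h] by (simp add: pos_divide_le_eq)
    qed
    have S2: "Max ((\<lambda>bs. seminorm_psi \<psi> k (dpar bs (\<lambda>x. f x * g x))) ` (dirs k :: 'a list set))
        \<le> 2 ^ k * (2 * A) * (Nf * Ng)"
    proof (rule Max.boundedI)
      show "finite ((\<lambda>bs. seminorm_psi \<psi> k (dpar bs (\<lambda>x. f x * g x))) ` (dirs k :: 'a list set))"
        using dirs_finite by blast
      show "(\<lambda>bs. seminorm_psi \<psi> k (dpar bs (\<lambda>x. f x * g x))) ` (dirs k :: 'a list set) \<noteq> {}"
        using dirs_ne by blast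
    qed (use semfg in blast)
    have "norm_Cpsi \<psi> k (\<lambda>x. f x * g x) \<le> real (k + 1) * 2 ^ k * (Nf * Ng) + 2 ^ k * (2 * A) * (Nf * Ng)"
      unfolding norm_Cpsi_def using S1 S2 by linarith
    also have "\<dots> = c1 * Nf * Ng" unfolding c1_def by (simp add: algebra_simps)
    finally show "norm_Cpsi \<psi> k (\<lambda>x. f x * g x) \<le> c1 * norm_Cpsi \<psi> k f * norm_Cpsi \<psi> k g"
      unfolding Nf_def Ng_def .
  qed
qed

end
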